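(* Let $k$ be a field of characteristic $p\ge0$ which is a finitely generated field extension of a perfect field, and let $\overline k$ be an algebraic closure of $k$. Let $$\sigma(x)=\sum_{i=d}^{\infty}\alpha_i x^i\in\overline k((x)),$$ with $d\in\mathbb Z$ and $\alpha_i\in\overline k$ for all $i$, and let $L=k(\{\alpha_i\})$ be the field generated over $k$ by the coefficients. Then $\sigma(x)$ is algebraic over $k((x))$ if and only if $[L:k]<\infty$.
   Context: $\overline k((x))$ denotes the field of formal Laurent series in $x$ with coefficients in $\overline k$. *)

theory Defs
  imports "HOL-Computational_Algebra.Computational_Algebra"
begin

definition is_subfield :: "'a::field set \<Rightarrow> bool" where
  "is_subfield K \<longleftrightarrow> 0 \<in> K \<and> 1 \<in> K \<and>
     (\<forall>x\<in>K. \<forall>y\<in>K. x + y \<in> K \<and> x - y \<in> K \<and> x * y \<in> K) \<and>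
     (\<forall>x\<in>K. inverse x \<in> K)"

definition field_generated :: "'a::field set \<Rightarrow> 'a set \<Rightarrow> 'a set" where
  "field_generated K S = \<Inter> {L. is_subfield L \<and> K \<union> S \<subseteq> L}"

text \<open>Perfect field (characteristic of the ambient field = characteristic of the subfield):
  characteristic 0, or every element has a p-th root in the field.\<close>
definition perfect_subfield :: "'a::field set \<Rightarrow> bool" where
  "perfect_subfield F \<longleftrightarrow> is_subfield F \<and>
     (CHAR('a) = 0 \<or> (\<forall>x\<in>F. \<exists>y\<in>F. y ^ CHAR('a) = x))"

definition fin_gen_over_perfect :: "'a::field set \<Rightarrow> bool" where
  "fin_gen_over_perfect K \<longleftrightarrow>
     (\<exists>F S. perfect_subfield F \<and> F \<subseteq> K \<and> finite S \<and> K = field_generated F S)"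

definition algebraic_over :: "'a::field set \<Rightarrow> 'a \<Rightarrow> bool" where
  "algebraic_over K a \<longleftrightarrow> (\<exists>p. p \<noteq> 0 \<and> (\<forall>i. coeff p i \<in> K) \<and> poly p a = 0)"

text \<open>The ambient field (an algebraically closed type) is an algebraic closure of K.\<close>
definition is_algebraic_closure_of :: "'a::alg_closed_field set \<Rightarrow> bool" where
  "is_algebraic_closure_of K \<longleftrightarrow> is_subfield K \<and> (\<forall>a. algebraic_over K a)"

text \<open>k((x)) inside kbar((x)): Laurent series all of whose coefficients lie in K.\<close>
definition laurent_over :: "'a::field set \<Rightarrow> 'a fls set" where
  "laurent_over K = {f. \<forall>n. fls_nth f n \<in> K}"

text \<open>[L:K] < infinity: L is spanned as a K-vector space by a finite subset.\<close>
definition finite_degree_over :: "'a::field set \<Rightarrow> 'a set \<Rightarrow> bool" where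
  "finite_degree_over K L \<longleftrightarrow>
     (\<exists>B. finite B \<and> B \<subseteq> L \<and> (\<forall>y\<in>L. \<exists>c. (\<forall>b. c b \<in> K) \<and> y = (\<Sum>b\<in>B. c b * b)))"

end

theory Submission
  imports Defs
begin
unbundle fps_syntax


definition subr :: "'a::comm_ring_1 set \<Rightarrow> bool" where
  "subr K \<longleftrightarrow> 0 \<in> K \<and> 1 \<in> K \<and> (\<forall>x\<in>K. \<forall>y\<in>K. x + y \<in> K \<and> x - y \<in> K \<and> x * y \<in> K)"

definition fspan :: "'a::comm_ring_1 set \<Rightarrow> 'a set \<Rightarrow> 'a set" where
  "fspan K M = {v. \<exists>c. (\<forall>m\<in>M. c m \<in> K) \<and> v = (\<Sum>m\<in>M. c m * m)}"

lemma subrD: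
  assumes "subr K"
  shows "0 \<in> K" "1 \<in> K" "x \<in> K \<Longrightarrow> y \<in> K \<Longrightarrow> x + y \<in> K"
    "x \<in> K \<Longrightarrow> y \<in> K \<Longrightarrow> x - y \<in> K" "x \<in> K \<Longrightarrow> y \<in> K \<Longrightarrow> x * y \<in> K"
  using assms unfolding subr_def by auto

lemma subr_uminus: "subr K \<Longrightarrow> x \<in> K \<Longrightarrow> - x \<in> K"
  by (metis subrD(1) subrD(4) diff_0)

lemma subr_sum: "subr K \<Longrightarrow> (\<And>i. i \<in> A \<Longrightarrow> f i \<in> K) \<Longrightarrow> (\<Sum>i\<in>A. f i) \<in> K"
  by (induction A rule: infinite_finite_induct) (auto intro: subrD)

lemma subr_prod: "subr K \<Longrightarrow> (\<And>i. i \<in> A \<Longrightarrow> f i \<in> K) \<Longrightarrow> (\<Prod>i\<in>A. f i) \<in> K"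
  by (induction A rule: infinite_finite_induct) (auto intro: subrD)

lemma subr_power: "subr K \<Longrightarrow> x \<in> K \<Longrightarrow> x ^ n \<in> K"
  by (induction n) (auto intro: subrD)

lemma subr_of_nat: "subr K \<Longrightarrow> of_nat n \<in> K"
  by (induction n) (auto intro: subrD)

lemma fspan_zero: "subr K \<Longrightarrow> 0 \<in> fspan K M"
  unfolding fspan_def by (rule CollectI, rule exI[of _ "\<lambda>_. 0"]) (auto intro: subrD)

lemma fspan_elem: "subr K \<Longrightarrow> finite M \<Longrightarrow> m \<in> M \<Longrightarrow> m \<in> fspan K M"
  unfolding fspan_def
proof (rule CollectI, rule exI[of _ "\<lambda>x. if x = m then 1 else 0"], intro conjI)
  assume "subr K" "finite M" "m \<in> M"
  show "\<forall>x\<in>M. (if x = m then 1 else 0) \<in> K" using \<open>subr K\<close> by (auto intro: subrD)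
  show "m = (\<Sum>x\<in>M. (if x = m then 1 else 0) * x)"
  proof -
    have "(\<Sum>x\<in>M. (if x = m then 1 else 0) * x) = (\<Sum>x\<in>M. if x = m then x else 0)"
      by (rule sum.cong) auto
    thus ?thesis using \<open>finite M\<close> \<open>m \<in> M\<close> by simp
  qed
qed

lemma fspan_add: "subr K \<Longrightarrow> x \<in> fspan K M \<Longrightarrow> y \<in> fspan K M \<Longrightarrow> x + y \<in> fspan K M"
  unfolding fspan_def
proof (clarify)
  fix c d assume "subr K" "\<forall>m\<in>M. c m \<in> K" "\<forall>m\<in>M. d m \<in> K"
  thus "\<exists>e. (\<forall>m\<in>M. e m \<in> K) \<and> (\<Sum>m\<in>M. c m * m) + (\<Sum>m\<in>M. d m * m) = (\<Sum>m\<in>M. e m * m)"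
    by (intro exI[of _ "\<lambda>m. c m + d m"]) (auto intro: subrD simp: sum.distrib distrib_right)
qed

lemma fspan_scale: "subr K \<Longrightarrow> a \<in> K \<Longrightarrow> x \<in> fspan K M \<Longrightarrow> a * x \<in> fspan K M"
  unfolding fspan_def
proof (clarify)
  fix c assume "subr K" "a \<in> K" "\<forall>m\<in>M. c m \<in> K"
  thus "\<exists>e. (\<forall>m\<in>M. e m \<in> K) \<and> a * (\<Sum>m\<in>M. c m * m) = (\<Sum>m\<in>M. e m * m)"
    by (intro exI[of _ "\<lambda>m. a * c m"]) (auto intro: subrD simp: sum_distrib_left mult.assoc)
qed

lemma fspan_diff: "subr K \<Longrightarrow> x \<in> fspan K M \<Longrightarrow> y \<in> fspan K M \<Longrightarrow> x - y \<in> fspan K M"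
  using fspan_add[of K x M "(-1) * y"] fspan_scale[of K "-1" y M] subr_uminus[of K 1] subrD(2)[of K]
  by simp

lemma fspan_sum: "subr K \<Longrightarrow> (\<And>i. i \<in> A \<Longrightarrow> f i \<in> fspan K M) \<Longrightarrow> (\<Sum>i\<in>A. f i) \<in> fspan K M"
  by (induction A rule: infinite_finite_induct) (auto intro: fspan_add fspan_zero)

lemma fspan_trans: assumes "subr K" "finite Y" "X \<subseteq> fspan K Y" shows "fspan K X \<subseteq> fspan K Y"
proof
  fix v assume "v \<in> fspan K X"
  then obtain c where c: "\<forall>m\<in>X. c m \<in> K" "v = (\<Sum>m\<in>X. c m * m)" unfolding fspan_def by auto
  show "v \<in> fspan K Y" unfolding c(2)
    using assms c(1) by (intro fspan_sum) (auto intro: fspan_scale)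
qed

lemma fspan_mono: "subr K \<Longrightarrow> finite Y \<Longrightarrow> X \<subseteq> Y \<Longrightarrow> fspan K X \<subseteq> fspan K Y"
  by (rule fspan_trans) (auto intro: fspan_elem)

definition setmul :: "'a::times set \<Rightarrow> 'a set \<Rightarrow> 'a set" where
  "setmul M N = (\<lambda>(m,n). m * n) ` (M \<times> N)"

lemma finite_setmul: "finite M \<Longrightarrow> finite N \<Longrightarrow> finite (setmul M N)"
  unfolding setmul_def by auto

lemma fspan_mult:
  assumes "subr K" "finite M" "finite N" "x \<in> fspan K M" "y \<in> fspan K N"
  shows "x * y \<in> fspan K (setmul M N)"
proof -
  obtain c where c: "\<forall>m\<in>M. c m \<in> K" "x = (\<Sum>m\<in>M. c m * m)" using assms(4) unfolding fspan_def by auto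
  obtain d where d: "\<forall>m\<in>N. d m \<in> K" "y = (\<Sum>m\<in>N. d m * m)" using assms(5) unfolding fspan_def by auto
  have "x * y = (\<Sum>m\<in>M. \<Sum>n\<in>N. (c m * d n) * (m * n))"
    unfolding c(2) d(2) sum_product by (simp add: algebra_simps)
  also have "\<dots> \<in> fspan K (setmul M N)"
    using assms c(1) d(1)
    by (intro fspan_sum fspan_scale fspan_elem finite_setmul) (auto intro: subrD simp: setmul_def)
  finally show ?thesis .
qed

lemma dependence:
  fixes v :: "'i \<Rightarrow> 'a::idom"
  assumes K: "subr K" and "finite B"
  shows "finite I \<Longrightarrow> card I > card B \<Longrightarrow> (\<forall>i\<in>I. v i \<in> fspan K B) \<Longrightarrow>
         \<exists>c. (\<forall>i\<in>I. c i \<in> K) \<and> (\<exists>i\<in>I. c i \<noteq> 0) \<and> (\<Sum>i\<in>I. c i * v i) = 0"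
  using assms(2)
proof (induction B arbitrary: I v rule: finite_induct)
  case empty
  then obtain i where "i \<in> I" by fastforce
  have "v k = 0" if "k \<in> I" for k using empty(3) that unfolding fspan_def by auto
  thus ?case using K \<open>i \<in> I\<close> by (intro exI[of _ "\<lambda>_. 1"]) (auto intro: subrD)
next
  case (insert b B)
  have "\<forall>i\<in>I. \<exists>c. (\<forall>m\<in>insert b B. c m \<in> K) \<and> v i = (\<Sum>m\<in>insert b B. c m * m)"
    using insert.prems(3) unfolding fspan_def by auto
  then obtain cf where cf: "\<And>i. i \<in> I \<Longrightarrow> (\<forall>m\<in>insert b B. cf i m \<in> K) \<and> v i = (\<Sum>m\<in>insert b B. cf i m * m)"
    by metis
  define a where "a i = cf i b" for i
  define w where "w i = (\<Sum>m\<in>B. cf i m * m)" for i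
  have aK: "a i \<in> K" if "i \<in> I" for i using cf[OF that] by (auto simp: a_def)
  have wB: "w i \<in> fspan K B" if "i \<in> I" for i
    using cf[OF that] unfolding w_def fspan_def by auto
  have vaw: "v i = a i * b + w i" if "i \<in> I" for i
    using cf[OF that] insert.hyps by (simp add: a_def w_def)
  show ?case
  proof (cases "\<forall>i\<in>I. a i = 0")
    case True
    have "\<forall>i\<in>I. v i \<in> fspan K B" using vaw wB True by auto
    moreover have "card I > card B" using insert by simp
    ultimately show ?thesis using insert.IH insert.prems(1) by blast
  next
    case False
    then obtain j where j: "j \<in> I" "a j \<noteq> 0" by blast
    define I' where "I' = I - {j}"
    define u where "u i = a j * v i - a i * v j" for i
    have "u i = a j * w i - a i * w j" if "i \<in> I" for i
      unfolding u_def using vaw[OF that] vaw[OF j(1)] by (simp add: algebra_simps)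
    hence uB: "\<forall>i\<in>I'. u i \<in> fspan K B"
      using K aK wB j(1) by (auto simp: I'_def intro!: fspan_diff fspan_scale)
    have cI': "card I' > card B" "finite I'"
      using insert j by (auto simp: I'_def)
    obtain d where d: "\<forall>i\<in>I'. d i \<in> K" "\<exists>i\<in>I'. d i \<noteq> 0" "(\<Sum>i\<in>I'. d i * u i) = 0"
      using insert.IH[OF cI'(2) cI'(1) uB] by blast
    define c where "c i = (if i = j then - (\<Sum>k\<in>I'. d k * a k) else d i * a j)" for i
    have "(\<Sum>i\<in>I. c i * v i) = c j * v j + (\<Sum>i\<in>I'. c i * v i)"
      using j insert.prems(1) by (simp add: I'_def sum.remove)
    also have "\<dots> = (\<Sum>i\<in>I'. d i * u i)"
      by (simp add: c_def I'_def u_def sum_distrib_left sum_distrib_right sum_subtractf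
           algebra_simps flip: sum.distrib)
    also have "\<dots> = 0" by (rule d(3))
    finally have "(\<Sum>i\<in>I. c i * v i) = 0" .
    moreover have "\<forall>i\<in>I. c i \<in> K"
      using K d(1) aK j(1) by (auto simp: c_def I'_def intro!: subrD subr_uminus subr_sum)
    moreover have "\<exists>i\<in>I. c i \<noteq> 0"
      using d(2) j(2) by (auto simp: c_def I'_def)
    ultimately show ?thesis by blast
  qed
qed


lemma subfield_subr: "is_subfield K \<Longrightarrow> subr K"
  unfolding is_subfield_def subr_def by auto

lemma subfield_inverse: "is_subfield K \<Longrightarrow> x \<in> K \<Longrightarrow> inverse x \<in> K"
  unfolding is_subfield_def by auto

lemma subfield_divide: "is_subfield K \<Longrightarrow> x \<in> K \<Longrightarrow> y \<in> K \<Longrightarrow> x / y \<in> K"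
  unfolding divide_inverse using subfield_inverse subfield_subr subrD(5) by blast

lemma subfield_field_generated: "is_subfield (field_generated K S)"
  unfolding is_subfield_def field_generated_def by auto

lemma field_generated_sup: "K \<union> S \<subseteq> field_generated K S"
  unfolding field_generated_def by auto

lemma field_generated_least: "is_subfield L \<Longrightarrow> K \<union> S \<subseteq> L \<Longrightarrow> field_generated K S \<subseteq> L"
  unfolding field_generated_def by auto

lemma poly_in_subr:
  assumes "subr V" "\<forall>i. coeff q i \<in> V" "y \<in> V"
  shows "poly q y \<in> V"
  using assms(2)
proof (induction q)
  case (pCons a q)
  have "\<forall>i. coeff q i \<in> V" using pCons.prems by (metis coeff_pCons_Suc)
  moreover have "a \<in> V" using pCons.prems by (metis coeff_pCons_0)
  ultimately show ?case using pCons.IH assms(1,3) by (auto intro: subrD)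
qed (use assms in \<open>auto intro: subrD\<close>)

lemma inverse_from_poly:
  fixes y :: "'a::field"
  assumes V: "subr V" and KV: "K \<subseteq> V" and K: "is_subfield K" and "y \<noteq> 0" "y \<in> V"
  shows "p \<noteq> 0 \<Longrightarrow> (\<forall>i. coeff p i \<in> K) \<Longrightarrow> poly p y = 0 \<Longrightarrow> inverse y \<in> V"
proof (induction p)
  case (pCons a q)
  have qK: "\<forall>i. coeff q i \<in> K" using pCons.prems(2) by (metis coeff_pCons_Suc)
  have aK: "a \<in> K" using pCons.prems(2) by (metis coeff_pCons_0)
  have eq: "a + y * poly q y = 0" using pCons.prems(3) by simp
  show ?case
  proof (cases "a = 0")
    case True
    then have "q \<noteq> 0" using pCons.prems(1) by auto
    moreover have "poly q y = 0" using eq True \<open>y \<noteq> 0\<close> by simp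
    ultimately show ?thesis using pCons.IH qK by blast
  next
    case False
    have "y * poly q y = - a" using eq by (metis add_eq_0_iff)
    hence "poly q y = - a / y" using \<open>y \<noteq> 0\<close> by (simp add: field_simps mult.commute)
    hence "inverse y = - poly q y / a"
      using False \<open>y \<noteq> 0\<close> by (simp add: divide_inverse)
    also have "\<dots> = (- inverse a) * poly q y" by (simp add: divide_inverse)
    also have "\<dots> \<in> V"
      using qK KV aK subfield_inverse[OF K aK] V \<open>y \<in> V\<close>
      by (intro subrD(5)[OF V] subr_uminus[OF V] poly_in_subr[OF V]) (auto intro: subrD)
    finally show ?thesis .
  qed
qed simp

lemma fspan_K: assumes "subr K" shows "fspan K {1} = K"
proof
  show "fspan K {1} \<subseteq> K" unfolding fspan_def by auto
  show "K \<subseteq> fspan K {1}" unfolding fspan_def by (auto intro!: exI[of _ "\<lambda>_. x" for x])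
qed

lemma powers_in_fspan:
  fixes a :: "'a::field"
  assumes K: "is_subfield K" and p: "p \<noteq> 0" "\<forall>i. coeff p i \<in> K" "poly p a = 0"
  shows "a ^ k \<in> fspan K ((\<lambda>j. a ^ j) ` {..<degree p})"
proof (induction k rule: less_induct)
  case (less k)
  define n where "n = degree p"
  define P where "P = (\<lambda>j. a ^ j) ` {..<n}"
  have R: "subr K" using K by (rule subfield_subr)
  show ?case
  proof (cases "k < n")
    case True
    thus ?thesis using R by (intro fspan_elem) (auto simp: n_def)
  next
    case False
    have lc: "lead_coeff p \<noteq> 0" using p by simp
    have "0 = (\<Sum>j\<le>n. coeff p j * a ^ j)" using p(3) by (simp add: poly_altdef n_def)
    also have "\<dots> = (\<Sum>j<n. coeff p j * a ^ j) + lead_coeff p * a ^ n"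
      by (simp add: n_def lessThan_Suc_atMost[symmetric])
    finally have "lead_coeff p * a ^ n = - (\<Sum>j<n. coeff p j * a ^ j)"
      by (metis add_eq_0_iff add.commute)
    hence "a ^ n = - (\<Sum>j<n. coeff p j * a ^ j) / lead_coeff p"
      using lc by (metis nonzero_mult_div_cancel_right mult.commute)
    also have "\<dots> = (\<Sum>j<n. (- coeff p j / lead_coeff p) * a ^ j)"
      by (simp add: sum_divide_distrib sum_negf[symmetric])
    finally have an: "a ^ n = (\<Sum>j<n. (- coeff p j / lead_coeff p) * a ^ j)" .
    have "a ^ k = a ^ (k - n) * a ^ n" using False by (simp flip: power_add)
    also have "\<dots> = (\<Sum>j<n. (- coeff p j / lead_coeff p) * a ^ (j + (k - n)))"
      unfolding an by (simp add: sum_distrib_left power_add algebra_simps)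
    also have "\<dots> \<in> fspan K P"
    proof (intro fspan_sum[OF R] fspan_scale[OF R])
      fix j assume "j \<in> {..<n}"
      thus "- coeff p j / lead_coeff p \<in> K"
        using p(2) K by (intro subfield_divide subr_uminus R) auto
      from \<open>j \<in> _\<close> False have "j + (k - n) < k" by auto
      thus "a ^ (j + (k - n)) \<in> fspan K P" using less.IH unfolding P_def n_def by blast
    qed
    finally show ?thesis unfolding P_def n_def .
  qed
qed

lemma fin_gen_ring:
  fixes T :: "'a::field set"
  assumes K: "is_subfield K" and "finite T" and alg: "\<forall>t\<in>T. algebraic_over K t"
  shows "\<exists>M. finite M \<and> 1 \<in> fspan K M \<and> T \<subseteq> fspan K M \<and>
              (\<forall>x\<in>fspan K M. \<forall>y\<in>fspan K M. x * y \<in> fspan K M)"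
  using assms(2) alg
proof (induction T rule: finite_induct)
  case empty
  have R: "subr K" using K by (rule subfield_subr)
  show ?case using R by (intro exI[of _ "{1}"]) (auto simp: fspan_K intro: subrD)
next
  case (insert a T)
  have R: "subr K" using K by (rule subfield_subr)
  from insert obtain M where M: "finite M" "1 \<in> fspan K M" "T \<subseteq> fspan K M"
    "\<forall>x\<in>fspan K M. \<forall>y\<in>fspan K M. x * y \<in> fspan K M" by auto
  from insert.prems obtain p where p: "p \<noteq> 0" "\<forall>i. coeff p i \<in> K" "poly p a = 0"
    unfolding algebraic_over_def by auto
  define P where "P = (\<lambda>j. a ^ j) ` {..<degree p}"
  have fP: "finite P" unfolding P_def by auto
  have pw: "a ^ k \<in> fspan K P" for k unfolding P_def by (rule powers_in_fspan[OF K p])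
  define M' where "M' = setmul M P"
  have fM': "finite M'" unfolding M'_def using M(1) fP by (rule finite_setmul)
  have PP: "x * y \<in> fspan K P" if "x \<in> fspan K P" "y \<in> fspan K P" for x y
  proof -
    have "x * y \<in> fspan K (setmul P P)" by (rule fspan_mult[OF R fP fP that])
    moreover have "setmul P P \<subseteq> fspan K P"
      unfolding setmul_def using pw unfolding P_def by (auto simp flip: power_add)
    ultimately show ?thesis using fspan_trans[OF R fP] by blast
  qed
  have mulM': "x * y \<in> fspan K M'" if "x \<in> fspan K M'" "y \<in> fspan K M'" for x y
  proof -
    have "x * y \<in> fspan K (setmul M' M')" by (rule fspan_mult[OF R fM' fM' that])
    moreover have "setmul M' M' \<subseteq> fspan K M'"
    proof
      fix z assume "z \<in> setmul M' M'"
      then obtain m1 m2 q1 q2 where z: "z = (m1 * q1) * (m2 * q2)" "m1 \<in> M" "m2 \<in> M" "q1 \<in> P" "q2 \<in> P"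
        unfolding setmul_def M'_def by auto
      have "z = (m1 * m2) * (q1 * q2)" using z(1) by (simp add: algebra_simps)
      moreover have "m1 * m2 \<in> fspan K M" using M(4) fspan_elem[OF R M(1)] z by auto
      moreover have "q1 * q2 \<in> fspan K P" using PP fspan_elem[OF R fP] z by auto
      ultimately show "z \<in> fspan K M'" unfolding M'_def using fspan_mult[OF R M(1) fP] by auto
    qed
    ultimately show ?thesis using fspan_trans[OF R fM'] by blast
  qed
  have one: "1 \<in> fspan K P" using pw[of 0] by simp
  have "a \<in> fspan K P" using pw[of 1] by simp
  hence "1 * a \<in> fspan K M'" unfolding M'_def by (rule fspan_mult[OF R M(1) fP M(2)])
  moreover have "t * 1 \<in> fspan K M'" if "t \<in> T" for t
    unfolding M'_def using M(3) that by (intro fspan_mult[OF R M(1) fP _ one]) auto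
  moreover have "1 * 1 \<in> fspan K M'" unfolding M'_def by (rule fspan_mult[OF R M(1) fP M(2) one])
  ultimately show ?case using fM' mulM' by (intro exI[of _ M']) auto
qed

lemma fin_gen:
  fixes T :: "'a::field set"
  assumes K: "is_subfield K" and "finite T" and alg: "\<forall>t\<in>T. algebraic_over K t"
  shows "\<exists>M. finite M \<and> field_generated K T \<subseteq> fspan K M"
proof -
  have R: "subr K" using K by (rule subfield_subr)
  obtain M where M: "finite M" "1 \<in> fspan K M" "T \<subseteq> fspan K M"
    "\<forall>x\<in>fspan K M. \<forall>y\<in>fspan K M. x * y \<in> fspan K M"
    using fin_gen_ring[OF assms] by blast
  define V where "V = fspan K M"
  have KV: "K \<subseteq> V" unfolding V_def
  proof
    fix k assume "k \<in> K"
    thus "k \<in> fspan K M" using fspan_scale[OF R _ M(2)] by fastforce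
  qed
  have RV: "subr V" unfolding subr_def V_def
    using M fspan_zero[OF R] fspan_add[OF R] fspan_diff[OF R] by auto
  have inv: "inverse y \<in> V" if "y \<in> V" for y
  proof (cases "y = 0")
    case True thus ?thesis using RV by (auto intro: subrD)
  next
    case False
    have pw: "y ^ i \<in> V" for i by (rule subr_power[OF RV \<open>y \<in> V\<close>])
    obtain c where c: "\<forall>i\<in>{0..card M}. c i \<in> K" "\<exists>i\<in>{0..card M}. c i \<noteq> 0"
      "(\<Sum>i\<in>{0..card M}. c i * y ^ i) = 0"
      using dependence[OF R M(1), of "{0..card M}" "\<lambda>i. y ^ i"] pw unfolding V_def by auto
    define p where "p = (\<Sum>i\<in>{0..card M}. monom (c i) i)"
    have cp: "coeff p n = (if n \<in> {0..card M} then c n else 0)" for n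
      unfolding p_def by (simp add: coeff_sum coeff_monom)
    have "p \<noteq> 0" using c(2) cp by (metis coeff_0)
    moreover have "\<forall>i. coeff p i \<in> K" using cp c(1) R by (auto intro: subrD)
    moreover have "poly p y = 0" using c(3) by (simp add: p_def poly_sum poly_monom)
    ultimately show ?thesis using inverse_from_poly[OF RV KV K False that] by blast
  qed
  have "is_subfield V" using RV inv unfolding is_subfield_def subr_def by auto
  moreover have "K \<union> T \<subseteq> V" using KV M(3) V_def by auto
  ultimately show ?thesis using M(1) field_generated_least unfolding V_def by blast
qed


definition indep :: "'a::comm_ring_1 set \<Rightarrow> 'a set \<Rightarrow> bool" where
  "indep K A \<longleftrightarrow> (\<forall>c. (\<forall>a\<in>A. c a \<in> K) \<longrightarrow> (\<Sum>a\<in>A. c a * a) = 0 \<longrightarrow> (\<forall>a\<in>A. c a = 0))"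

lemma indep_card:
  fixes A :: "'a::idom set"
  assumes "subr K" "finite M" "finite A" "A \<subseteq> fspan K M" "indep K A"
  shows "card A \<le> card M"
proof (rule ccontr)
  assume "\<not> card A \<le> card M"
  then obtain c where "\<forall>i\<in>A. c i \<in> K" "\<exists>i\<in>A. c i \<noteq> 0" "(\<Sum>i\<in>A. c i * i) = 0"
    using dependence[OF assms(1,2) assms(3), of "\<lambda>i. i"] assms(4) by auto
  thus False using assms(5) unfolding indep_def by blast
qed

lemma subspace_fin:
  fixes L :: "'a::field set"
  assumes K: "is_subfield K" and M: "finite M" and LM: "L \<subseteq> fspan K M"
  shows "\<exists>B. finite B \<and> B \<subseteq> L \<and> (\<forall>y\<in>L. \<exists>c. (\<forall>b. c b \<in> K) \<and> y = (\<Sum>b\<in>B. c b * b))"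
proof -
  have R: "subr K" using K by (rule subfield_subr)
  define S where "S = {card A | A. finite A \<and> A \<subseteq> L \<and> indep K A}"
  have Sb: "S \<subseteq> {..card M}" unfolding S_def using indep_card[OF R M] LM by fastforce
  have "0 \<in> S" unfolding S_def by (rule CollectI, rule exI[of _ "{}"]) (auto simp: indep_def)
  hence "Max S \<in> S" using Sb finite_subset by (intro Max_in) auto
  then obtain A where A: "finite A" "A \<subseteq> L" "indep K A" "card A = Max S"
    unfolding S_def by auto
  have max: "card A' \<le> card A" if "finite A'" "A' \<subseteq> L" "indep K A'" for A'
    unfolding A(4) using that Sb finite_subset by (intro Max_ge) (auto simp: S_def)
  have "\<exists>c. (\<forall>b. c b \<in> K) \<and> y = (\<Sum>b\<in>A. c b * b)" if "y \<in> L" for y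
  proof (cases "y \<in> A")
    case True
    have "(\<Sum>b\<in>A. (if b = y then 1 else 0) * b) = (\<Sum>b\<in>A. if b = y then b else 0)"
      by (rule sum.cong) auto
    also have "\<dots> = y" using True A(1) by simp
    finally show ?thesis using R by (intro exI[of _ "\<lambda>b. if b = y then 1 else 0"]) (auto intro: subrD)
  next
    case False
    have "\<not> indep K (insert y A)"
    proof
      assume "indep K (insert y A)"
      hence "card (insert y A) \<le> card A" using max A that by auto
      thus False using False A(1) by simp
    qed
    then obtain c where c: "\<forall>a\<in>insert y A. c a \<in> K" "(\<Sum>a\<in>insert y A. c a * a) = 0"
      "\<exists>a\<in>insert y A. c a \<noteq> 0" unfolding indep_def by blast
    have sum: "c y * y + (\<Sum>a\<in>A. c a * a) = 0" using c(2) False A(1) by simp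
    have cy: "c y \<noteq> 0"
    proof
      assume "c y = 0"
      hence "(\<Sum>a\<in>A. c a * a) = 0" using sum by simp
      hence "\<forall>a\<in>A. c a = 0" using A(3) c(1) unfolding indep_def by auto
      thus False using c(3) \<open>c y = 0\<close> by auto
    qed
    have "c y * y = - (\<Sum>a\<in>A. c a * a)" using sum by (metis add_eq_0_iff add.commute)
    hence "y = - (\<Sum>a\<in>A. c a * a) / c y" using cy by (metis nonzero_mult_div_cancel_left)
    also have "\<dots> = (\<Sum>b\<in>A. (if b \<in> A then - c b / c y else 0) * b)"
      by (simp add: sum_divide_distrib sum_negf[symmetric])
    finally show ?thesis
      using c(1) K R by (intro exI[of _ "\<lambda>b. if b \<in> A then - c b / c y else 0"])
        (auto intro!: subfield_divide subr_uminus intro: subrD)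
  qed
  thus ?thesis using A(1,2) by blast
qed


lemma laurent_over_subr:
  assumes "subr K" shows "subr (laurent_over K)"
  unfolding subr_def laurent_over_def
  using assms by (auto intro: subrD subr_sum simp: fls_times_nth(2))

lemma laurent_over_mono: "K \<subseteq> L \<Longrightarrow> laurent_over K \<subseteq> laurent_over L"
  unfolding laurent_over_def by auto

lemma laurent_decomp:
  fixes s :: "'a::field fls"
  assumes K: "subr K" and B: "finite B"
    and span: "\<forall>y\<in>L. \<exists>c. (\<forall>b. c b \<in> K) \<and> y = (\<Sum>b\<in>B. c b * b)"
    and s: "s \<in> laurent_over L"
  shows "s \<in> fspan (laurent_over K) (fls_const ` B)"
proof -
  have ex: "\<exists>c. (\<forall>b. c b \<in> K) \<and> s $$ n = (\<Sum>b\<in>B. c b * b) \<and> (s $$ n = 0 \<longrightarrow> c = (\<lambda>_. 0))" for n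
  proof (cases "s $$ n = 0")
    case True
    show ?thesis using True subrD(1)[OF K] by (intro exI[of _ "\<lambda>_. 0"]) simp
  next
    case False
    have "s $$ n \<in> L" using s unfolding laurent_over_def by blast
    then obtain c where "\<forall>b. c b \<in> K" "s $$ n = (\<Sum>b\<in>B. c b * b)" using span by blast
    thus ?thesis using False by blast
  qed
  have "\<exists>cf. \<forall>n. (\<forall>b. cf n b \<in> K) \<and> s $$ n = (\<Sum>b\<in>B. cf n b * b) \<and> (s $$ n = 0 \<longrightarrow> cf n = (\<lambda>_. 0))"
    using ex by (rule choice[OF allI])
  then obtain cf where cf0: "\<forall>n. (\<forall>b. cf n b \<in> K) \<and> s $$ n = (\<Sum>b\<in>B. cf n b * b) \<and> (s $$ n = 0 \<longrightarrow> cf n = (\<lambda>_. 0))"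
    by (elim exE)
  have cf1: "cf n b \<in> K" for n b using cf0 by blast
  have cf2: "s $$ n = (\<Sum>b\<in>B. cf n b * b)" for n using cf0 by blast
  have cf3: "cf n b = 0" if "n < fls_subdegree s" for n b
  proof -
    have "s $$ n = 0" using that by simp
    hence "cf n = (\<lambda>_. 0)" using cf0 by blast
    thus ?thesis by simp
  qed
  define C where "C b = Abs_fls (\<lambda>n. cf n b)" for b
  have Cn: "C b $$ n = cf n b" for b n
    unfolding C_def by (rule nth_Abs_fls_lower_bound[of "fls_subdegree s"]) (rule allI, rule impI, rule cf3)
  have CK: "C b \<in> laurent_over K" for b unfolding laurent_over_def mem_Collect_eq Cn using cf1 by blast
  have "s = (\<Sum>b\<in>B. C b * fls_const b)"
  proof (rule fls_eqI)
    fix n show "s $$ n = (\<Sum>b\<in>B. C b * fls_const b) $$ n"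
      unfolding fls_nth_sum fls_mult_const_nth Cn by (rule cf2)
  qed
  also have "\<dots> = (\<Sum>m\<in>fls_const ` B. C (inv_into B fls_const m) * m)"
  proof -
    have inj: "inj_on fls_const B"
    proof (rule inj_onI)
      fix x y assume "fls_const x = fls_const (y::'a)"
      hence "fls_const x $$ 0 = fls_const y $$ 0" by simp
      thus "x = y" by simp
    qed
    show ?thesis unfolding sum.reindex[OF inj] comp_def
      by (rule sum.cong[OF refl]) (simp add: inv_into_f_f[OF inj])
  qed
  also have "\<dots> \<in> fspan (laurent_over K) (fls_const ` B)"
    unfolding fspan_def using CK by (intro CollectI exI[of _ "\<lambda>m. C (inv_into B fls_const m)"]) simp
  finally show ?thesis .
qed

lemma easy_direction:
  fixes K :: "'a::field set" and \<sigma> :: "'a fls"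
  assumes K: "is_subfield K"
    and fd: "finite_degree_over K (field_generated K (range (\<lambda>i. fls_nth \<sigma> i)))"
  shows "algebraic_over (laurent_over K) \<sigma>"
proof -
  define L where "L = field_generated K (range (\<lambda>i. fls_nth \<sigma> i))"
  have "\<exists>B. finite B \<and> B \<subseteq> L \<and> (\<forall>y\<in>L. \<exists>c. (\<forall>b. c b \<in> K) \<and> y = (\<Sum>b\<in>B. c b * b))"
    using fd unfolding finite_degree_over_def L_def .
  then obtain B where B: "finite B" "B \<subseteq> L" "\<forall>y\<in>L. \<exists>c. (\<forall>b. c b \<in> K) \<and> y = (\<Sum>b\<in>B. c b * b)"
    by (elim exE conjE) (rule that; assumption)
  have R: "subr K" using K by (rule subfield_subr)
  have RL: "subr (laurent_over L)" unfolding L_def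
    by (intro laurent_over_subr subfield_subr subfield_field_generated)
  have RK: "subr (laurent_over K)" by (rule laurent_over_subr[OF R])
  have sL: "\<sigma> \<in> laurent_over L"
  proof -
    have "range (\<lambda>i. fls_nth \<sigma> i) \<subseteq> L" unfolding L_def using field_generated_sup by (rule Un_subset_iff[THEN iffD1, THEN conjunct2])
    thus ?thesis unfolding laurent_over_def by auto
  qed
  define M where "M = fls_const ` B"
  have fM: "finite M" using B(1) by (simp add: M_def)
  have pw: "\<sigma> ^ i \<in> fspan (laurent_over K) M" for i
    unfolding M_def by (rule laurent_decomp[OF R B(1) B(3) subr_power[OF RL sL]])
  have pwI: "\<forall>i\<in>{0..card M}. \<sigma> ^ i \<in> fspan (laurent_over K) M" using pw by blast
  have cardI: "card M < card {0..card M}" by simp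
  obtain c where c: "\<forall>i\<in>{0..card M}. c i \<in> laurent_over K" "\<exists>i\<in>{0..card M}. c i \<noteq> 0"
    "(\<Sum>i\<in>{0..card M}. c i * \<sigma> ^ i) = 0"
    using dependence[OF RK fM finite_atLeastAtMost cardI pwI] by blast
  define p where "p = (\<Sum>i\<in>{0..card M}. monom (c i) i)"
  have cp: "coeff p n = (if n \<in> {0..card M} then c n else 0)" for n
    unfolding p_def by (simp add: coeff_sum coeff_monom)
  have "p \<noteq> 0"
  proof
    assume "p = 0"
    hence "c i = 0" if "i \<in> {0..card M}" for i using cp[of i] that by simp
    thus False using c(2) by blast
  qed
  moreover have "\<forall>i. coeff p i \<in> laurent_over K" using cp c(1) RK by (auto intro: subrD)
  moreover have "poly p \<sigma> = 0" using c(3) by (simp add: p_def poly_sum poly_monom)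
  ultimately show ?thesis unfolding algebraic_over_def by blast
qed


definition val_ge :: "int \<Rightarrow> 'a::zero fls \<Rightarrow> bool" where
  "val_ge c s \<longleftrightarrow> (\<forall>i<c. s $$ i = 0)"

lemma val_geD: "val_ge c s \<Longrightarrow> i < c \<Longrightarrow> s $$ i = 0"
  unfolding val_ge_def by auto

lemma val_ge_mono: "c' \<le> c \<Longrightarrow> val_ge c s \<Longrightarrow> val_ge c' s"
  unfolding val_ge_def by auto

lemma val_ge_zero [simp]: "val_ge c 0"
  unfolding val_ge_def by auto

lemma val_ge_add: "val_ge c s \<Longrightarrow> val_ge c t \<Longrightarrow> val_ge c (s + t)"
  unfolding val_ge_def by auto

lemma val_ge_diff: "val_ge c s \<Longrightarrow> val_ge c (t::'a::ab_group_add fls) \<Longrightarrow> val_ge c (s - t)"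
  unfolding val_ge_def by auto

lemma val_ge_subdegree: "val_ge (fls_subdegree s) s"
  unfolding val_ge_def by auto

lemma val_ge_mult:
  fixes s t :: "'a::comm_ring_1 fls"
  assumes "val_ge a s" "val_ge b t"
  shows "val_ge (a + b) (s * t)"
  unfolding val_ge_def
proof (intro allI impI)
  fix n assume n: "n < a + b"
  have "(s * t) $$ n = (\<Sum>i=fls_subdegree s..n - fls_subdegree t. s $$ i * t $$ (n - i))"
    by (rule fls_times_nth(2))
  also have "\<dots> = 0"
  proof (rule sum.neutral, rule ballI)
    fix i
    show "s $$ i * t $$ (n - i) = 0"
    proof (cases "i < a")
      case True thus ?thesis using val_geD[OF assms(1)] by simp
    next
      case False hence "n - i < b" using n by simp
      thus ?thesis using val_geD[OF assms(2)] by simp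
    qed
  qed
  finally show "(s * t) $$ n = 0" .
qed

lemma val_ge_mult_nth:
  fixes s t :: "'a::comm_ring_1 fls"
  assumes "val_ge a s" "val_ge b t"
  shows "(s * t) $$ (a + b) = s $$ a * t $$ b"
proof -
  define A where "A = {fls_subdegree s..a + b - fls_subdegree t}"
  have "(s * t) $$ (a + b) = (\<Sum>i\<in>A. s $$ i * t $$ (a + b - i))"
    unfolding A_def by (rule fls_times_nth(2))
  also have "\<dots> = (\<Sum>i\<in>A. if i = a then s $$ a * t $$ b else 0)"
  proof (rule sum.cong[OF refl])
    fix i assume "i \<in> A"
    show "s $$ i * t $$ (a + b - i) = (if i = a then s $$ a * t $$ b else 0)"
    proof (cases "i < a")
      case True thus ?thesis using val_geD[OF assms(1)] by simp
    next
      case False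
      show ?thesis
      proof (cases "i = a")
        case False
        hence "a + b - i < b" using \<open>\<not> i < a\<close> by simp
        thus ?thesis using val_geD[OF assms(2)] False by simp
      qed simp
    qed
  qed
  also have "\<dots> = (if a \<in> A then s $$ a * t $$ b else 0)"
    unfolding A_def by (simp add: sum.delta)
  also have "\<dots> = s $$ a * t $$ b"
  proof (cases "a \<in> A")
    case False
    hence "a < fls_subdegree s \<or> b < fls_subdegree t" unfolding A_def by auto
    thus ?thesis using False by auto
  qed simp
  finally show ?thesis .
qed

lemma val_ge_of_nat_mult: "val_ge c s \<Longrightarrow> val_ge c (of_nat k * (s::'a::comm_ring_1 fls))"
  unfolding val_ge_def by simp

lemma poly_val:
  fixes Q :: "'a::comm_ring_1 fls poly"
  assumes "\<forall>i. val_ge c1 (coeff Q i)" "val_ge d0 y" "d0 \<le> 0"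
  shows "val_ge (c1 + int (degree Q) * d0) (poly Q y)"
  using assms(1)
proof (induction Q)
  case (pCons a P)
  have cP: "\<forall>i. val_ge c1 (coeff P i)" using pCons.prems by (metis coeff_pCons_Suc)
  have ca: "val_ge c1 a" using pCons.prems by (metis coeff_pCons_0)
  show ?case
  proof (cases "P = 0")
    case True thus ?thesis using ca by simp
  next
    case False
    have deg: "degree (pCons a P) = Suc (degree P)" using False by simp
    have "val_ge (d0 + (c1 + int (degree P) * d0)) (y * poly P y)"
      by (rule val_ge_mult[OF assms(2) pCons.IH[OF cP]])
    moreover have "val_ge (d0 + (c1 + int (degree P) * d0)) a"
    proof (rule val_ge_mono[OF _ ca])
      have "(1 + int (degree P)) * d0 \<le> 0" using assms(3) by (simp add: mult_nonneg_nonpos)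
      thus "d0 + (c1 + int (degree P) * d0) \<le> c1" by (simp add: algebra_simps)
    qed
    ultimately show ?thesis using deg by (simp add: val_ge_add algebra_simps)
  qed
qed simp

lemma poly_S:
  fixes Q :: "'a::comm_ring_1 fls poly"
  assumes "\<forall>i. val_ge c1 (coeff Q i)" "val_ge d0 y" "val_ge d0 h" "val_ge n h" "d0 \<le> 0"
  shows "val_ge (n + c1 + int (degree Q) * d0) (poly Q (y + h) - poly Q y)"
  using assms(1)
proof (induction Q)
  case (pCons a P)
  have cP: "\<forall>i. val_ge c1 (coeff P i)" using pCons.prems by (metis coeff_pCons_Suc)
  show ?case
  proof (cases "P = 0")
    case True thus ?thesis by simp
  next
    case False
    have deg: "degree (pCons a P) = Suc (degree P)" using False by simp
    have eq: "poly (pCons a P) (y + h) - poly (pCons a P) y = y * (poly P (y + h) - poly P y) + h * poly P (y + h)"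
      by (simp add: algebra_simps)
    have "val_ge (d0 + (n + c1 + int (degree P) * d0)) (y * (poly P (y + h) - poly P y))"
      by (rule val_ge_mult[OF assms(2) pCons.IH[OF cP]])
    moreover have "val_ge (n + (c1 + int (degree P) * d0)) (h * poly P (y + h))"
      by (rule val_ge_mult[OF assms(4) poly_val[OF cP val_ge_add[OF assms(2,3)] assms(5)]])
    hence "val_ge (d0 + (n + c1 + int (degree P) * d0)) (h * poly P (y + h))"
      by (rule val_ge_mono[rotated]) (use assms(5) in simp)
    ultimately have "val_ge (d0 + (n + c1 + int (degree P) * d0)) (y * (poly P (y + h) - poly P y) + h * poly P (y + h))"
      by (rule val_ge_add)
    thus ?thesis unfolding eq deg by (rule val_ge_mono[rotated]) (simp add: algebra_simps)
  qed
qed simp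

lemma poly_T:
  fixes Q :: "'a::field fls poly"
  assumes "\<forall>i. val_ge c1 (coeff Q i)" "val_ge d0 y" "val_ge d0 h" "val_ge n h" "d0 \<le> 0"
  shows "val_ge (2 * n + c1 + int (degree Q) * d0)
           (poly Q (y + h) - poly Q y - h * poly (pderiv Q) y)"
  using assms(1)
proof (induction Q)
  case (pCons a P)
  have cP: "\<forall>i. val_ge c1 (coeff P i)" using pCons.prems by (metis coeff_pCons_Suc)
  show ?case
  proof (cases "P = 0")
    case True thus ?thesis by (simp add: pderiv_pCons)
  next
    case False
    have deg: "degree (pCons a P) = Suc (degree P)" using False by simp
    have eq: "poly (pCons a P) (y + h) - poly (pCons a P) y - h * poly (pderiv (pCons a P)) y =
      y * (poly P (y + h) - poly P y - h * poly (pderiv P) y) + h * (poly P (y + h) - poly P y)"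
      by (simp add: pderiv_pCons algebra_simps)
    have "val_ge (d0 + (2 * n + c1 + int (degree P) * d0)) (y * (poly P (y + h) - poly P y - h * poly (pderiv P) y))"
      by (rule val_ge_mult[OF assms(2) pCons.IH[OF cP]])
    moreover have "val_ge (n + (n + c1 + int (degree P) * d0)) (h * (poly P (y + h) - poly P y))"
      by (rule val_ge_mult[OF assms(4) poly_S[OF cP assms(2-5)]])
    hence "val_ge (d0 + (2 * n + c1 + int (degree P) * d0)) (h * (poly P (y + h) - poly P y))"
      by (rule val_ge_mono[rotated]) (use assms(5) in simp)
    ultimately have "val_ge (d0 + (2 * n + c1 + int (degree P) * d0)) (y * (poly P (y + h) - poly P y - h * poly (pderiv P) y) + h * (poly P (y + h) - poly P y))"
      by (rule val_ge_add)
    thus ?thesis unfolding eq deg by (rule val_ge_mono[rotated]) (simp add: algebra_simps)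
  qed
qed simp


lemma coeff_bound_exists:
  fixes Q :: "'a::zero fls poly"
  shows "\<exists>c1. \<forall>i. val_ge c1 (coeff Q i)"
proof -
  define c1 where "c1 = - (\<Sum>i\<le>degree Q. \<bar>fls_subdegree (coeff Q i)\<bar>)"
  have "val_ge c1 (coeff Q i)" for i
  proof (cases "i \<le> degree Q")
    case True
    have "\<bar>fls_subdegree (coeff Q i)\<bar> \<le> (\<Sum>i\<le>degree Q. \<bar>fls_subdegree (coeff Q i)\<bar>)"
      using True by (intro member_le_sum) auto
    hence "c1 \<le> fls_subdegree (coeff Q i)" unfolding c1_def by linarith
    thus ?thesis by (rule val_ge_mono) (rule val_ge_subdegree)
  next
    case False thus ?thesis by (simp add: coeff_eq_0)
  qed
  thus ?thesis by blast
qed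

lemma val_ge_uminus: "val_ge c (- s) \<Longrightarrow> val_ge c (s::'a::ab_group_add fls)"
  unfolding val_ge_def by auto

lemma laurent_over_of_nat: "subr K \<Longrightarrow> of_nat k \<in> laurent_over K"
  unfolding laurent_over_def by (auto simp: fls_of_nat_nth intro: subr_of_nat subrD)

lemma hensel_step:
  fixes f :: "'a::field fls" and Q :: "'a fls poly"
  assumes E: "is_subfield E" and QE: "\<forall>i. coeff Q i \<in> laurent_over E"
    and root: "poly Q f = 0" and nz: "poly (pderiv Q) f \<noteq> 0"
    and c1: "\<forall>i. val_ge c1 (coeff Q i)" and c1D: "\<forall>i. val_ge c1 (coeff (pderiv Q) i)"
    and d0: "d0 = min 0 (fls_subdegree f)"
    and v: "v = fls_subdegree (poly (pderiv Q) f)"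
    and n1: "n + v < 2 * n + (c1 + int (degree Q) * d0)"
    and n2: "n + v < 2 * n + (c1 + int (degree (pderiv Q)) * d0)"
    and n3: "v < n + (c1 + int (degree (pderiv Q)) * d0)"
    and below: "\<forall>i<n. f $$ i \<in> E"
  shows "f $$ n \<in> E"
proof -
  define D where "D = pderiv Q"
  have RE: "subr E" using E by (rule subfield_subr)
  have RLE: "subr (laurent_over E)" by (rule laurent_over_subr[OF RE])
  define g where "g = Abs_fls (\<lambda>i. if i < n then f $$ i else 0)"
  have gn: "g $$ i = (if i < n then f $$ i else 0)" for i
    unfolding g_def by (rule nth_Abs_fls_lower_bound[of "fls_subdegree f"]) auto
  define h where "h = f - g"
  have hn: "h $$ i = (if i < n then 0 else f $$ i)" for i
    unfolding h_def by (simp add: gn)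
  have fgh: "f = g + h" unfolding h_def by simp
  have d0g: "val_ge d0 g" unfolding val_ge_def gn d0 by auto
  have d0h: "val_ge d0 h" unfolding val_ge_def hn d0 by auto
  have nh: "val_ge n h" unfolding val_ge_def hn by auto
  have d0le: "d0 \<le> 0" unfolding d0 by simp
  have gE: "g \<in> laurent_over E" unfolding laurent_over_def mem_Collect_eq gn using below subrD(1)[OF RE] by auto
  have DE: "\<forall>i. coeff D i \<in> laurent_over E"
    unfolding D_def coeff_pderiv using QE laurent_over_of_nat[OF RE, of "Suc _"] subrD(5)[OF RLE] by blast
  have AE: "poly Q g \<in> laurent_over E" by (rule poly_in_subr[OF RLE QE gE])
  have BE: "poly D g \<in> laurent_over E" by (rule poly_in_subr[OF RLE DE gE])
  have T: "val_ge (2 * n + c1 + int (degree Q) * d0) (poly Q (g + h) - poly Q g - h * poly D g)"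
    unfolding D_def by (rule poly_T[OF c1 d0g d0h nh d0le])
  have S: "val_ge (n + c1 + int (degree D) * d0) (poly D (g + h) - poly D g)"
    by (rule poly_S[OF c1D[folded D_def] d0g d0h nh d0le])
  define F where "F = poly D f"
  have vF: "val_ge v F" unfolding F_def v D_def by (rule val_ge_subdegree)
  have Fv: "F $$ v \<noteq> 0" unfolding F_def v D_def using nz by simp
  have 1: "(poly Q g + h * poly D g) $$ (n + v) = 0"
  proof -
    have "poly Q (g + h) - poly Q g - h * poly D g = - (poly Q g + h * poly D g)"
      using root fgh by simp
    hence "val_ge (2 * n + c1 + int (degree Q) * d0) (- (poly Q g + h * poly D g))"
      using T by simp
    hence "val_ge (2 * n + c1 + int (degree Q) * d0) (poly Q g + h * poly D g)"
      by (rule val_ge_uminus)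
    thus ?thesis using n1 by (intro val_geD) auto
  qed
  have 2: "(h * (F - poly D g)) $$ (n + v) = 0"
  proof -
    have "val_ge (n + (n + c1 + int (degree D) * d0)) (h * (F - poly D g))"
      using val_ge_mult[OF nh S] fgh unfolding F_def by simp
    thus ?thesis using n2 unfolding D_def by (intro val_geD) auto
  qed
  have 3: "(h * F) $$ (n + v) = f $$ n * F $$ v"
    using val_ge_mult_nth[OF nh vF] hn by simp
  have 4: "(F - poly D g) $$ v = 0"
    using val_geD[OF S[folded fgh F_def]] n3 unfolding D_def by auto
  have "h * poly D g = h * F - h * (F - poly D g)" by (simp add: algebra_simps)
  hence "(poly Q g) $$ (n + v) + f $$ n * F $$ v = 0"
    using 1 2 3 by simp
  moreover have FvE: "F $$ v \<in> E"
    using 4 BE unfolding laurent_over_def by auto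
  moreover have "(poly Q g) $$ (n + v) \<in> E" using AE unfolding laurent_over_def by auto
  ultimately have "f $$ n * F $$ v = - (poly Q g $$ (n + v))"
    by (metis add_eq_0_iff)
  hence "f $$ n = - (poly Q g $$ (n + v)) / F $$ v"
    using Fv by (metis nonzero_mult_div_cancel_right)
  also have "\<dots> \<in> E" using FvE \<open>(poly Q g) $$ (n + v) \<in> E\<close> E RE
    by (intro subfield_divide subr_uminus) auto
  finally show ?thesis .
qed


lemma hensel:
  fixes f :: "'a::field fls" and Q :: "'a fls poly"
  assumes K: "is_subfield K" and QK: "\<forall>i. coeff Q i \<in> laurent_over K"
    and root: "poly Q f = 0" and nz: "poly (pderiv Q) f \<noteq> 0"
  shows "\<exists>N. \<forall>n. f $$ n \<in> field_generated K (fls_nth f ` {fls_subdegree f..N})"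
proof -
  obtain c1 where c1: "\<forall>i. val_ge c1 (coeff Q i)" using coeff_bound_exists by blast
  have c1D: "\<forall>i. val_ge c1 (coeff (pderiv Q) i)"
    unfolding coeff_pderiv using c1 val_ge_of_nat_mult by blast
  define d0 where "d0 = min 0 (fls_subdegree f)"
  define v where "v = fls_subdegree (poly (pderiv Q) f)"
  define CQ where "CQ = c1 + int (degree Q) * d0"
  define CD where "CD = c1 + int (degree (pderiv Q)) * d0"
  define N where "N = \<bar>v\<bar> + \<bar>CQ\<bar> + \<bar>CD\<bar>"
  define E where "E = field_generated K (fls_nth f ` {fls_subdegree f..N})"
  have E: "is_subfield E" unfolding E_def by (rule subfield_field_generated)
  have KE: "K \<subseteq> E" unfolding E_def using field_generated_sup by blast
  have QE: "\<forall>i. coeff Q i \<in> laurent_over E" using QK laurent_over_mono[OF KE] by blast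
  have gen: "fls_nth f ` {fls_subdegree f..N} \<subseteq> E" unfolding E_def using field_generated_sup by blast
  have zE: "0 \<in> E" using E unfolding is_subfield_def by blast
  have claim: "\<forall>n. n \<le> N + int k \<longrightarrow> f $$ n \<in> E" for k
  proof (induction k)
    case 0
    show ?case
    proof (intro allI impI)
      fix n assume "n \<le> N + int 0"
      show "f $$ n \<in> E"
      proof (cases "n < fls_subdegree f")
        case True thus ?thesis using zE by simp
      next
        case False thus ?thesis using gen \<open>n \<le> N + int 0\<close> by auto
      qed
    qed
  next
    case (Suc k)
    show ?case
    proof (intro allI impI)
      fix n assume n: "n \<le> N + int (Suc k)"
      show "f $$ n \<in> E"
      proof (cases "n \<le> N + int k")
        case True thus ?thesis using Suc.IH by blast
      next
        case False
        have below: "\<forall>i<n. f $$ i \<in> E" using Suc.IH n by auto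
        have nN: "n > N" using False by simp
        show ?thesis
        proof (rule hensel_step[OF E QE root nz c1 c1D d0_def v_def _ _ _ below])
          show "n + v < 2 * n + (c1 + int (degree Q) * d0)"
            using nN unfolding N_def CQ_def[symmetric] by linarith
          show "n + v < 2 * n + (c1 + int (degree (pderiv Q)) * d0)"
            using nN unfolding N_def CD_def[symmetric] by linarith
          show "v < n + (c1 + int (degree (pderiv Q)) * d0)"
            using nN unfolding N_def CD_def[symmetric] by linarith
        qed
      qed
    qed
  qed
  have "f $$ n \<in> E" for n using claim[of "nat (n - N)"] by auto
  thus ?thesis unfolding E_def by blast
qed


lemma degree_pderiv_le': "degree (pderiv Q) \<le> degree Q - 1"
  by (rule degree_le) (auto simp: coeff_pderiv coeff_eq_0)

lemma pderiv_coeffs_in: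
  assumes "subr K" "\<forall>i. coeff Q i \<in> laurent_over K"
  shows "\<forall>i. coeff (pderiv Q) i \<in> laurent_over K"
  unfolding coeff_pderiv using assms laurent_over_of_nat[OF assms(1), of "Suc _"]
    subrD(5)[OF laurent_over_subr[OF assms(1)]] by blast

lemma deg_pos_of_root:
  fixes Q :: "'b::comm_ring_1 poly"
  assumes "Q \<noteq> 0" "poly Q y = 0" shows "degree Q \<ge> 1"
proof (rule ccontr)
  assume "\<not> degree Q \<ge> 1"
  hence "degree Q = 0" by simp
  hence Qc: "[:coeff Q 0:] = Q" by (rule degree_0_id)
  have "poly [:coeff Q 0:] y = coeff Q 0" by simp
  hence "poly Q y = coeff Q 0" using Qc by simp
  moreover have "coeff Q 0 \<noteq> 0"
  proof
    assume "coeff Q 0 = 0"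
    hence "Q = 0" using Qc by simp
    thus False using assms(1) by simp
  qed
  ultimately show False using assms(2) by simp
qed

lemma expand_char:
  fixes Q :: "'b::field poly" and p :: nat
  assumes p: "p > 1" and van: "\<forall>i. \<not> p dvd i \<longrightarrow> coeff Q i = 0"
  defines "R \<equiv> (\<Sum>j\<le>degree Q. monom (coeff Q (p * j)) j)"
  shows "poly R (y ^ p) = poly Q y" "\<forall>j. coeff R j = (if j \<le> degree Q then coeff Q (p * j) else 0)"
proof -
  show cR: "\<forall>j. coeff R j = (if j \<le> degree Q then coeff Q (p * j) else 0)"
    unfolding R_def by (simp add: coeff_sum coeff_monom)
  have "poly R (y ^ p) = (\<Sum>j\<le>degree Q. coeff Q (p * j) * y ^ (p * j))"
    unfolding R_def by (simp add: poly_sum poly_monom power_mult)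
  also have "\<dots> = (\<Sum>i\<in>(\<lambda>j. p * j) ` {..degree Q}. coeff Q i * y ^ i)"
    using p by (subst sum.reindex) (auto simp: inj_on_def)
  also have "\<dots> = (\<Sum>i\<le>p * degree Q. coeff Q i * y ^ i)"
  proof (rule sum.mono_neutral_left)
    show "(\<lambda>j. p * j) ` {..degree Q} \<subseteq> {..p * degree Q}" by auto
    show "\<forall>i\<in>{..p * degree Q} - (\<lambda>j. p * j) ` {..degree Q}. coeff Q i * y ^ i = 0"
    proof
      fix i assume i: "i \<in> {..p * degree Q} - (\<lambda>j. p * j) ` {..degree Q}"
      show "coeff Q i * y ^ i = 0"
      proof (cases "p dvd i")
        case True
        then obtain j where "i = p * j" by (auto elim: dvdE)
        hence "j > degree Q" using i by auto
        moreover have "j \<le> p * j" using p by simp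
        ultimately have "i > degree Q" using \<open>i = p * j\<close> by linarith
        thus ?thesis by (simp add: coeff_eq_0)
      qed (use van in simp)
    qed
  qed simp
  also have "\<dots> = (\<Sum>i\<le>degree Q. coeff Q i * y ^ i)"
  proof (rule sum.mono_neutral_right)
    show "{..degree Q} \<subseteq> {..p * degree Q}" using p by auto
  qed (auto simp: coeff_eq_0)
  also have "\<dots> = poly Q y" by (simp add: poly_altdef)
  finally show "poly R (y ^ p) = poly Q y" .
qed

lemma reduce:
  fixes \<sigma> :: "'a::field fls"
  assumes K: "is_subfield K" and alg: "algebraic_over (laurent_over K) \<sigma>"
  shows "\<exists>e Q. CHAR('a) ^ e \<noteq> 0 \<and> (\<forall>i. coeff Q i \<in> laurent_over K) \<and>
           poly Q (\<sigma> ^ (CHAR('a) ^ e)) = 0 \<and> poly (pderiv Q) (\<sigma> ^ (CHAR('a) ^ e)) \<noteq> 0"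
proof -
  have R: "subr K" using K by (rule subfield_subr)
  define P where "P e Q \<longleftrightarrow> CHAR('a) ^ e \<noteq> 0 \<and> Q \<noteq> 0 \<and> (\<forall>i. coeff Q i \<in> laurent_over K) \<and>
           poly Q (\<sigma> ^ (CHAR('a) ^ e)) = 0" for e Q
  from alg obtain p0 where "p0 \<noteq> 0" "\<forall>i. coeff p0 i \<in> laurent_over K" "poly p0 \<sigma> = 0"
    unfolding algebraic_over_def by blast
  hence ex: "\<exists>e Q. P e Q \<and> degree Q = degree p0" unfolding P_def by (intro exI[of _ 0] exI[of _ p0]) simp
  define m where "m = (LEAST d. \<exists>e Q. P e Q \<and> degree Q = d)"
  have "\<exists>e Q. P e Q \<and> degree Q = m" unfolding m_def by (rule LeastI_ex) (use ex in blast)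
  then obtain e Q where Q: "P e Q" "degree Q = m" by blast
  have minimal: "degree Q' \<ge> m" if "P e' Q'" for e' Q'
    unfolding m_def using that by (intro Least_le) blast
  define y where "y = \<sigma> ^ (CHAR('a) ^ e)"
  have Qy: "poly Q y = 0" "Q \<noteq> 0" "\<forall>i. coeff Q i \<in> laurent_over K" "CHAR('a) ^ e \<noteq> 0"
    using Q(1) unfolding P_def y_def by auto
  have deg1: "degree Q \<ge> 1" by (rule deg_pos_of_root[OF Qy(2,1)])
  have "poly (pderiv Q) y \<noteq> 0"
  proof (cases "pderiv Q = 0")
    case False
    show ?thesis
    proof
      assume "poly (pderiv Q) y = 0"
      hence "P e (pderiv Q)" using False pderiv_coeffs_in[OF R Qy(3)] Qy(4) unfolding P_def y_def by auto
      hence "degree (pderiv Q) \<ge> m" by (rule minimal)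
      moreover have "degree (pderiv Q) < m" using degree_pderiv_le'[of Q] deg1 Q(2) by linarith
      ultimately show False by simp
    qed
  next
    case True
    have van0: "of_nat (Suc i) * coeff Q (Suc i) = 0" for i
      using arg_cong[OF True, of "\<lambda>r. coeff r i"] by (simp add: coeff_pderiv)
    show ?thesis
    proof (cases "CHAR('a) = 0")
      case True
      have "coeff Q (Suc i) = 0" for i
      proof -
        have "\<not> CHAR('a fls) dvd Suc i" using True by simp
        hence "(of_nat (Suc i) :: 'a fls) \<noteq> 0" by (metis of_nat_eq_0_iff_char_dvd)
        thus ?thesis using van0[of i] by simp
      qed
      hence "coeff Q (Suc (degree Q - 1)) = 0" by blast
      hence "coeff Q (degree Q) = 0" using deg1 by simp
      thus ?thesis using Qy(2) by simp
    next
      case False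
      define p where "p = CHAR('a)"
      have pp: "prime p" unfolding p_def using False prime_CHAR_semidom by blast
      hence p1: "p > 1" using prime_gt_1_nat by blast
      have van: "\<forall>i. \<not> p dvd i \<longrightarrow> coeff Q i = 0"
      proof (intro allI impI)
        fix i assume nd: "\<not> p dvd i"
        hence "i \<noteq> 0" by (metis dvd_0_right)
        then obtain j where j: "i = Suc j" by (cases i) auto
        have "\<not> CHAR('a fls) dvd i" using nd by (simp add: p_def)
        hence "(of_nat i :: 'a fls) \<noteq> 0" by (metis of_nat_eq_0_iff_char_dvd)
        thus "coeff Q i = 0" using van0[of j] j by simp
      qed
      define R where "R = (\<Sum>j\<le>degree Q. monom (coeff Q (p * j)) j)"
      have Rpoly: "poly R (y ^ p) = poly Q y" and cR: "\<forall>j. coeff R j = (if j \<le> degree Q then coeff Q (p * j) else 0)"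
        using expand_char(1)[OF p1 van, of y] expand_char(2)[OF p1 van] unfolding R_def by auto
      have pdeg: "p dvd degree Q"
      proof (rule ccontr)
        assume "\<not> p dvd degree Q"
        hence "coeff Q (degree Q) = 0" using van by blast
        thus False using Qy(2) by simp
      qed
      then obtain d where d: "degree Q = p * d" by (auto elim: dvdE)
      have "coeff R d = lead_coeff Q" using cR d p1 by auto
      hence Rnz: "R \<noteq> 0" using Qy(2) by auto
      have "degree R \<le> d"
      proof (rule degree_le, intro allI impI)
        fix j assume "d < j"
        hence "p * j > degree Q" using d p1 by simp
        thus "coeff R j = 0" using cR by (simp add: coeff_eq_0)
      qed
      moreover have "d < degree Q"
      proof -
        have "d \<noteq> 0" using d deg1 by auto
        hence "d * 1 < d * p" using p1 by (intro mult_strict_left_mono) auto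
        thus ?thesis using d by (simp add: mult.commute)
      qed
      ultimately have Rdeg: "degree R < m" using Q(2) by simp
      have "P (Suc e) R"
        unfolding P_def
      proof (intro conjI)
        show "CHAR('a) ^ Suc e \<noteq> 0" using False by simp
        show "R \<noteq> 0" by (rule Rnz)
        show "\<forall>i. coeff R i \<in> laurent_over K" using cR Qy(3) subrD(1)[OF laurent_over_subr[OF R]] by auto
        have "\<sigma> ^ (CHAR('a) ^ Suc e) = y ^ p" unfolding y_def p_def by (simp add: power_mult[symmetric] mult.commute)
        thus "poly R (\<sigma> ^ (CHAR('a) ^ Suc e)) = 0" using Rpoly Qy(1) by simp
      qed
      hence "degree R \<ge> m" by (rule minimal)
      thus ?thesis using Rdeg by simp
    qed
  qed
  thus ?thesis using Qy unfolding y_def by blast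
qed


lemma X_intpow_nth: "(fls_const c * fls_X_intpow j) $$ n = (if n = j then (c::'a::field) else 0)"
  by simp

lemma frob_fls_nth:
  fixes s :: "'a::field fls"
  assumes pr: "prime CHAR('a)" and q: "q = CHAR('a) ^ e"
  shows "(s ^ q) $$ (int q * i) = (s $$ i) ^ q"
proof -
  have q0: "q > 0" using q pr by (simp add: prime_gt_0_nat)
  define lo where "lo = fls_subdegree s"
  define d0 where "d0 = min 0 lo"
  define M where "M = int q * i - int q * d0"
  define t where "t = (\<Sum>j\<in>{lo..M}. fls_const (s $$ j) * fls_X_intpow j)"
  have tn: "t $$ n = (if lo \<le> n \<and> n \<le> M then s $$ n else 0)" for n
  proof -
    have "t $$ n = (\<Sum>j\<in>{lo..M}. if n = j then s $$ j else 0)"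
      unfolding t_def fls_nth_sum X_intpow_nth by simp
    also have "\<dots> = (if lo \<le> n \<and> n \<le> M then s $$ n else 0)"
      by (simp add: sum.delta)
    finally show ?thesis .
  qed
  define h where "h = s - t"
  have hn: "h $$ n = (if n \<le> M then 0 else s $$ n)" for n
    unfolding h_def using tn[of n] by (auto simp: lo_def)
  have vt: "val_ge d0 t" unfolding val_ge_def tn d0_def by auto
  have vh: "val_ge d0 h" unfolding val_ge_def hn d0_def lo_def by auto
  have vhM: "val_ge (M + 1) h" unfolding val_ge_def hn by auto
  have cm: "\<forall>k. val_ge 0 (coeff (monom (1::'a fls) q) k)"
    by (auto simp: coeff_monom val_ge_def)
  have "val_ge (M + 1 + 0 + int (degree (monom (1::'a fls) q)) * d0)
          (poly (monom 1 q) (t + h) - poly (monom 1 q) t)"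
    by (rule poly_S[OF cm vt vh vhM]) (simp add: d0_def)
  hence V: "val_ge (M + 1 + int q * d0) ((t + h) ^ q - t ^ q)"
    by (simp add: poly_monom degree_monom_eq)
  have "t + h = s" unfolding h_def by simp
  hence "(s ^ q - t ^ q) $$ (int q * i) = 0"
    using val_geD[OF V] by (simp add: M_def)
  hence 1: "(s ^ q) $$ (int q * i) = (t ^ q) $$ (int q * i)" by simp
  have prF: "prime CHAR('a fls)" using pr by simp
  have "t ^ q = (\<Sum>j\<in>{lo..M}. (fls_const (s $$ j) * fls_X_intpow j) ^ q)"
    unfolding t_def by (rule freshmans_dream_sum'[OF prF]) (simp add: q)
  also have "\<dots> = (\<Sum>j\<in>{lo..M}. fls_const ((s $$ j) ^ q) * fls_X_intpow (int q * j))"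
    by (simp add: power_mult_distrib fls_const_power fls_X_intpow_power)
  finally have 2: "(t ^ q) $$ (int q * i) = (\<Sum>j\<in>{lo..M}. (s $$ j) ^ q * (if i = j then 1 else 0))"
    using q0 by (simp add: fls_nth_sum)
  also have "\<dots> = (\<Sum>j\<in>{lo..M}. if i = j then (s $$ j) ^ q else 0)"
    by (intro sum.cong) auto
  also have "\<dots> = (if lo \<le> i \<and> i \<le> M then (s $$ i) ^ q else 0)"
    by (simp add: sum.delta)
  also have "\<dots> = (s $$ i) ^ q"
  proof (cases "lo \<le> i")
    case True
    have "(int q - 1) * d0 \<le> (int q - 1) * i"
      using True q0 by (intro mult_left_mono) (auto simp: d0_def)
    hence "i \<le> M" unfolding M_def using q0 by (simp add: algebra_simps d0_def)
    thus ?thesis using True by simp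
  next
    case False
    thus ?thesis using q0 by (simp add: lo_def)
  qed
  finally show ?thesis using 1 by simp
qed


lemma frob_add:
  fixes x y :: "'a::field"
  assumes "prime CHAR('a)" "q = CHAR('a) ^ e"
  shows "(x + y) ^ q = x ^ q + y ^ q"
  by (rule freshmans_dream'[OF assms])

lemma frob_diff:
  fixes x y :: "'a::field"
  assumes "prime CHAR('a)" "q = CHAR('a) ^ e"
  shows "(x - y) ^ q = x ^ q - y ^ q"
proof -
  have "x ^ q = (x - y) ^ q + y ^ q" using frob_add[OF assms, of "x - y" y] by simp
  thus ?thesis by simp
qed

lemma frob_inj:
  fixes x y :: "'a::field"
  assumes "prime CHAR('a)" "q = CHAR('a) ^ e" "x ^ q = y ^ q"
  shows "x = y"
proof -
  have "(x - y) ^ q = 0" using frob_diff[OF assms(1,2)] assms(3) by simp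
  thus ?thesis by simp
qed

lemma perfect_iter:
  fixes F :: "'a::field set"
  assumes "perfect_subfield F" "CHAR('a) > 0"
  shows "\<forall>x\<in>F. \<exists>y\<in>F. y ^ (CHAR('a) ^ e) = x"
proof (induction e)
  case 0
  show ?case by auto
next
  case (Suc e)
  have perf: "\<forall>x\<in>F. \<exists>y\<in>F. y ^ CHAR('a) = x" using assms unfolding perfect_subfield_def by auto
  show ?case
  proof
    fix x assume "x \<in> F"
    then obtain y1 where y1: "y1 \<in> F" "y1 ^ CHAR('a) = x" using perf by blast
    then obtain y2 where y2: "y2 \<in> F" "y2 ^ (CHAR('a) ^ e) = y1" using Suc.IH by blast
    have "y2 ^ (CHAR('a) ^ Suc e) = (y2 ^ (CHAR('a) ^ e)) ^ CHAR('a)"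
      by (simp add: power_mult[symmetric] mult.commute)
    thus "\<exists>y\<in>F. y ^ (CHAR('a) ^ Suc e) = x" using y1 y2 by auto
  qed
qed

lemma frob_image_subfield:
  fixes G :: "'a::field set"
  assumes pr: "prime CHAR('a)" and q: "q = CHAR('a) ^ e" and G: "is_subfield G"
  shows "is_subfield ((\<lambda>u. u ^ q) ` G)"
proof -
  have q0: "q > 0" using q pr by (simp add: prime_gt_0_nat)
  have R: "subr G" using G by (rule subfield_subr)
  show ?thesis unfolding is_subfield_def
  proof (intro conjI ballI)
    show "0 \<in> (\<lambda>u. u ^ q) ` G" using q0 subrD(1)[OF R] by (intro image_eqI[of _ _ 0]) auto
    show "1 \<in> (\<lambda>u. u ^ q) ` G" using subrD(2)[OF R] by (intro image_eqI[of _ _ 1]) auto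
    fix x y assume x: "x \<in> (\<lambda>u. u ^ q) ` G" and y: "y \<in> (\<lambda>u. u ^ q) ` G"
    then obtain a b where ab: "a \<in> G" "b \<in> G" "x = a ^ q" "y = b ^ q" by auto
    show "x + y \<in> (\<lambda>u. u ^ q) ` G"
      using ab frob_add[OF pr q, of a b] subrD(3)[OF R] by (intro image_eqI[of _ _ "a + b"]) auto
    show "x - y \<in> (\<lambda>u. u ^ q) ` G"
      using ab frob_diff[OF pr q, of a b] subrD(4)[OF R] by (intro image_eqI[of _ _ "a - b"]) auto
    show "x * y \<in> (\<lambda>u. u ^ q) ` G"
      using ab subrD(5)[OF R] by (intro image_eqI[of _ _ "a * b"]) (auto simp: power_mult_distrib)
  next
    fix x assume "x \<in> (\<lambda>u. u ^ q) ` G"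
    then obtain a where a: "a \<in> G" "x = a ^ q" by auto
    show "inverse x \<in> (\<lambda>u. u ^ q) ` G"
      using a subfield_inverse[OF G a(1)] by (intro image_eqI[of _ _ "inverse a"]) (auto simp: power_inverse)
  qed
qed

lemma frob_preimage_subfield:
  fixes E :: "'a::field set"
  assumes pr: "prime CHAR('a)" and q: "q = CHAR('a) ^ e" and E: "is_subfield E"
  shows "is_subfield {z. z ^ q \<in> E}"
proof -
  have q0: "q > 0" using q pr by (simp add: prime_gt_0_nat)
  have R: "subr E" using E by (rule subfield_subr)
  show ?thesis unfolding is_subfield_def
    using q0 subrD[OF R] subfield_inverse[OF E] frob_add[OF pr q] frob_diff[OF pr q]
    by (auto simp: power_mult_distrib power_inverse zero_power[OF q0])
qed

lemma field_generated_mono: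
  "K \<subseteq> K' \<Longrightarrow> S \<subseteq> S' \<Longrightarrow> field_generated K S \<subseteq> field_generated K' S'"
  by (rule field_generated_least[OF subfield_field_generated]) (use field_generated_sup[of K' S'] in auto)

lemma perfect_part:
  fixes K :: "'a::alg_closed_field set"
  assumes K: "is_subfield K" and F: "perfect_subfield F" and FK: "F \<subseteq> K"
    and KFS: "K = field_generated F S" and S: "finite S"
    and alg: "\<forall>a. algebraic_over K a"
    and pr: "prime CHAR('a)" and q: "q = CHAR('a) ^ e" and A: "finite A"
  shows "\<exists>M. finite M \<and> {z. z ^ q \<in> field_generated K A} \<subseteq> fspan K M"
proof -
  have q0: "q > 0" using q pr by (simp add: prime_gt_0_nat)
  define T where "T = S \<union> A"
  define r where "r t = (SOME z. z ^ q = t)" for t :: 'a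
  have r: "r t ^ q = t" for t unfolding r_def by (rule someI_ex) (rule nth_root_exists[OF q0])
  define T' where "T' = r ` T"
  have fT': "finite T'" unfolding T'_def T_def using S A by simp
  define G where "G = field_generated F T'"
  define W where "W = (\<lambda>u. u ^ q) ` G"
  have G: "is_subfield G" unfolding G_def by (rule subfield_field_generated)
  have W: "is_subfield W" unfolding W_def by (rule frob_image_subfield[OF pr q G])
  have FW: "F \<subseteq> W"
  proof
    fix x assume "x \<in> F"
    then obtain y where "y \<in> F" "y ^ q = x"
      using perfect_iter[OF F, of e] pr q by (auto simp: prime_gt_0_nat)
    moreover have "F \<subseteq> G" unfolding G_def using field_generated_sup by blast
    ultimately show "x \<in> W" unfolding W_def by auto
  qed
  have TW: "T \<subseteq> W"
  proof
    fix t assume "t \<in> T"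
    hence "r t \<in> G" unfolding G_def T'_def using field_generated_sup by blast
    thus "t \<in> W" unfolding W_def using r[of t] by (intro image_eqI[of _ _ "r t"]) auto
  qed
  have FT: "is_subfield (field_generated F T)" by (rule subfield_field_generated)
  have "K \<subseteq> field_generated F T" unfolding KFS T_def
    by (rule field_generated_mono) auto
  hence "field_generated K A \<subseteq> field_generated F T"
    by (intro field_generated_least[OF FT]) (use field_generated_sup[of F T] T_def in auto)
  also have "field_generated F T \<subseteq> W" by (rule field_generated_least[OF W]) (use FW TW in auto)
  finally have sub: "field_generated K A \<subseteq> W" .
  have GK: "G \<subseteq> field_generated K T'" unfolding G_def using FK by (rule field_generated_mono) simp
  obtain M where M: "finite M" "field_generated K T' \<subseteq> fspan K M"
    using fin_gen[OF K fT'] alg by blast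
  have "{z. z ^ q \<in> field_generated K A} \<subseteq> fspan K M"
  proof
    fix z assume "z \<in> {z. z ^ q \<in> field_generated K A}"
    hence "z ^ q \<in> W" using sub by auto
    then obtain u where u: "u \<in> G" "z ^ q = u ^ q" unfolding W_def by auto
    hence "z = u" using frob_inj[OF pr q] by blast
    thus "z \<in> fspan K M" using u GK M(2) by auto
  qed
  thus ?thesis using M(1) by blast
qed

theorem corollary2p6:
  fixes K :: "'a::alg_closed_field set" and \<sigma> :: "'a fls"
  assumes "is_algebraic_closure_of K"
    and "fin_gen_over_perfect K"
  shows "algebraic_over (laurent_over K) \<sigma> \<longleftrightarrow>
         finite_degree_over K (field_generated K (range (\<lambda>i. fls_nth \<sigma> i)))"
proof
  have K: "is_subfield K" and alg: "\<forall>a. algebraic_over K a"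
    using assms(1) unfolding is_algebraic_closure_of_def by auto
  assume Asig: "algebraic_over (laurent_over K) \<sigma>"
  obtain e Q where Q: "CHAR('a) ^ e \<noteq> 0" "\<forall>i. coeff Q i \<in> laurent_over K"
    "poly Q (\<sigma> ^ (CHAR('a) ^ e)) = 0" "poly (pderiv Q) (\<sigma> ^ (CHAR('a) ^ e)) \<noteq> 0"
    using reduce[OF K Asig] by blast
  define q where "q = CHAR('a) ^ e"
  define f where "f = \<sigma> ^ q"
  obtain N where N: "\<forall>n. f $$ n \<in> field_generated K (fls_nth f ` {fls_subdegree f..N})"
    using hensel[OF K Q(2) Q(3)[folded q_def f_def] Q(4)[folded q_def f_def]] by blast
  define A0 where "A0 = fls_nth f ` {fls_subdegree f..N}"
  define E where "E = field_generated K A0"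
  have fA0: "finite A0" unfolding A0_def by simp
  have E: "is_subfield E" unfolding E_def by (rule subfield_field_generated)
  have KE: "K \<subseteq> E" unfolding E_def using field_generated_sup by blast
  have fE: "f $$ n \<in> E" for n using N unfolding E_def A0_def by blast
  define L where "L = field_generated K (range (\<lambda>i. fls_nth \<sigma> i))"
  have "\<exists>M. finite M \<and> L \<subseteq> fspan K M"
  proof (cases "CHAR('a) = 0")
    case True
    hence "e = 0" using Q(1) by (cases e) auto
    hence fs: "f = \<sigma>" unfolding f_def q_def by simp
    obtain M where M: "finite M" "E \<subseteq> fspan K M" using fin_gen[OF K fA0] alg unfolding E_def by blast
    have "L \<subseteq> E" unfolding L_def
      by (rule field_generated_least[OF E]) (use KE fE fs in auto)
    thus ?thesis using M by blast
  next
    case False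
    have pr: "prime CHAR('a)" using False prime_CHAR_semidom by blast
    obtain F S where FS: "perfect_subfield F" "F \<subseteq> K" "finite S" "K = field_generated F S"
      using assms(2) unfolding fin_gen_over_perfect_def by blast
    obtain M where M: "finite M" "{z. z ^ q \<in> E} \<subseteq> fspan K M"
      using perfect_part[OF K FS(1,2,4,3) alg pr q_def fA0] unfolding E_def by blast
    have Z: "is_subfield {z. z ^ q \<in> E}" by (rule frob_preimage_subfield[OF pr q_def E])
    have KZ: "K \<subseteq> {z. z ^ q \<in> E}" using KE subr_power[OF subfield_subr[OF K]] by auto
    have "\<sigma> $$ i \<in> {z. z ^ q \<in> E}" for i
      using frob_fls_nth[OF pr q_def, of \<sigma> i] fE[of "int q * i"] unfolding f_def by simp
    hence "L \<subseteq> {z. z ^ q \<in> E}" unfolding L_def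
      by (intro field_generated_least[OF Z]) (use KZ in auto)
    thus ?thesis using M by blast
  qed
  then obtain M where M: "finite M" "L \<subseteq> fspan K M" by blast
  show "finite_degree_over K (field_generated K (range (\<lambda>i. fls_nth \<sigma> i)))"
    unfolding finite_degree_over_def L_def[symmetric] using subspace_fin[OF K M] by blast
next
  have K: "is_subfield K" using assms(1) unfolding is_algebraic_closure_of_def by auto
  assume "finite_degree_over K (field_generated K (range (\<lambda>i. fls_nth \<sigma> i)))"
  thus "algebraic_over (laurent_over K) \<sigma>" by (rule easy_direction[OF K])
qed


end
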